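(* Let $H$ be a graph and $q\in\mathbb N$, and suppose $H\otimes J_q$ contains a matching-linked set $X$. Then $\gamma(H)\ge \frac13\cdot |X|/q$.
   Context: Blowup: for a graph $H$ and $t\in\mathbb N$, $H\otimes J_t$ has vertices $v^{(i)}$ for $v\in V(H)$, $i\in[t]$, and edges $u^{(i)}v^{(j)}$ for all $uv\in E(H)$, $i,j\in[t]$, together with $u^{(i)}u^{(j)}$ for all $u\in V(H)$, $i\neq j\in[t]$. A matching on a vertex set $X$ is a set of pairwise disjoint unordered pairs of distinct vertices of $X$ (not necessarily edges of the graph). For a graph $H'$ and a multigraph $M$ with $V(M)\subseteq V(H')$, an $M$-linkage in $H'$ is a family of paths $(P_e)_{e\in E(M)}$ in $H'$ such that $P_e$ has the endpoints of $e$ as its endpoints; it is uncongested if every vertex lies on at most one of the paths. $X\subseteq V(H')$ is matching-linked in $H'$ if $H'$ contains an uncongested $M$-linkage for every matching $M$ on $X$. Linkage capacity: $\gamma(H)$ is the supremum of all $c>0$ such that for all sufficiently large $t\in\mathbb N$ the blowup $H\otimes J_t$ contains a matching-linked set of size $\lfloor ct\rfloor$. *)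

theory Defs
  imports Complex_Main
begin

definition graph :: "'a set \<Rightarrow> 'a set set \<Rightarrow> bool" where
  "graph V E \<longleftrightarrow> finite V \<and> (\<forall>e\<in>E. \<exists>u v. e = {u, v} \<and> u \<noteq> v \<and> u \<in> V \<and> v \<in> V)"

definition blowup_V :: "'a set \<Rightarrow> nat \<Rightarrow> ('a \<times> nat) set" where
  "blowup_V V t = V \<times> {0..<t}"

definition blowup_E :: "'a set \<Rightarrow> 'a set set \<Rightarrow> nat \<Rightarrow> ('a \<times> nat) set set" where
  "blowup_E V E t =
     {{(u, i), (v, j)} | u v i j. {u, v} \<in> E \<and> i < t \<and> j < t}
   \<union> {{(u, i), (u, j)} | u i j. u \<in> V \<and> i < t \<and> j < t \<and> i \<noteq> j}"

definition is_path :: "'a set \<Rightarrow> 'a set set \<Rightarrow> 'a list \<Rightarrow> 'a \<Rightarrow> 'a \<Rightarrow> bool" where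
  "is_path V E p a b \<longleftrightarrow> p \<noteq> [] \<and> distinct p \<and> hd p = a \<and> last p = b \<and> set p \<subseteq> V \<and>
     (\<forall>k. Suc k < length p \<longrightarrow> {p ! k, p ! Suc k} \<in> E)"

definition matching_on :: "'a set \<Rightarrow> 'a set set \<Rightarrow> bool" where
  "matching_on X M \<longleftrightarrow>
     (\<forall>e\<in>M. \<exists>a b. e = {a, b} \<and> a \<noteq> b \<and> a \<in> X \<and> b \<in> X) \<and>
     (\<forall>e\<in>M. \<forall>f\<in>M. e \<noteq> f \<longrightarrow> e \<inter> f = {})"

definition has_uncongested_linkage :: "'a set \<Rightarrow> 'a set set \<Rightarrow> 'a set set \<Rightarrow> bool" where
  "has_uncongested_linkage V E M \<longleftrightarrow>
     (\<exists>P :: 'a set \<Rightarrow> 'a list.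
        (\<forall>e\<in>M. \<exists>a b. e = {a, b} \<and> is_path V E (P e) a b) \<and>
        (\<forall>e\<in>M. \<forall>f\<in>M. e \<noteq> f \<longrightarrow> set (P e) \<inter> set (P f) = {}))"

definition matching_linked :: "'a set \<Rightarrow> 'a set set \<Rightarrow> 'a set \<Rightarrow> bool" where
  "matching_linked V E X \<longleftrightarrow> X \<subseteq> V \<and>
     (\<forall>M. matching_on X M \<longrightarrow> has_uncongested_linkage V E M)"

text \<open>Linkage capacity; the supremum of an empty set of positive reals is taken to be 0.\<close>
definition linkage_capacity :: "'a set \<Rightarrow> 'a set set \<Rightarrow> real" where
  "linkage_capacity V E = Sup (insert 0 {c::real. c > 0 \<and>
     (\<exists>T::nat. \<forall>t\<ge>T. \<exists>X. matching_linked (blowup_V V t) (blowup_E V E t) X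
                          \<and> card X = nat \<lfloor>c * real t\<rfloor>)})"

end

theory Submission
  imports Defs
begin

definition shift :: "nat \<Rightarrow> nat \<Rightarrow> 'a \<times> nat \<Rightarrow> 'a \<times> nat" where
  "shift q l w = (fst w, snd w + q * l)"

lemma inj_shift: "inj (shift q l)"
  by (auto simp: inj_def shift_def prod_eq_iff)

lemma edge_same: "v \<in> V \<Longrightarrow> i < t \<Longrightarrow> j < t \<Longrightarrow> i \<noteq> j \<Longrightarrow> {(v,i),(v,j)} \<in> blowup_E V E t"
  unfolding blowup_E_def by blast

lemma edge_shift:
  assumes "e \<in> blowup_E V E q" "q * l + q \<le> t"
  shows "shift q l ` e \<in> blowup_E V E t"
proof -
  from assms(1) consider (a) u v i j where "e = {(u,i),(v,j)}" "{u,v} \<in> E" "i < q" "j < q"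
    | (b) u i j where "e = {(u,i),(u,j)}" "u \<in> V" "i < q" "j < q" "i \<noteq> j"
    unfolding blowup_E_def by blast
  then show ?thesis
  proof cases
    case a
    then have "shift q l ` e = {(u, i + q*l), (v, j + q*l)}" by (simp add: shift_def)
    moreover have "i + q*l < t" "j + q*l < t" using a assms(2) by auto
    ultimately show ?thesis using a unfolding blowup_E_def by blast
  next
    case b
    then have "shift q l ` e = {(u, i + q*l), (u, j + q*l)}" by (simp add: shift_def)
    moreover have "i + q*l < t" "j + q*l < t" "i + q*l \<noteq> j + q*l" using b assms(2) by auto
    ultimately show ?thesis using b unfolding blowup_E_def by blast
  qed
qed

lemma shift_V:
  assumes "w \<in> blowup_V V q" "q * l + q \<le> t"
  shows "shift q l w \<in> blowup_V V t"
  using assms by (auto simp: blowup_V_def shift_def)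

lemma path_map:
  assumes "is_path (blowup_V V q) (blowup_E V E q) p u v" "q * l + q \<le> t"
  shows "is_path (blowup_V V t) (blowup_E V E t) (map (shift q l) p) (shift q l u) (shift q l v)"
proof -
  have "\<forall>k. Suc k < length p \<longrightarrow> {p ! k, p ! Suc k} \<in> blowup_E V E q"
    using assms(1) unfolding is_path_def by blast
  then have "\<forall>k. Suc k < length p \<longrightarrow> shift q l ` {p ! k, p ! Suc k} \<in> blowup_E V E t"
    using edge_shift assms(2) by blast
  moreover have "set p \<subseteq> blowup_V V q" using assms(1) unfolding is_path_def by blast
  moreover have "set (map (shift q l) p) \<subseteq> blowup_V V t"
  proof
    fix w assume "w \<in> set (map (shift q l) p)"
    then obtain x where "x \<in> set p" "w = shift q l x" by auto
    then show "w \<in> blowup_V V t" using \<open>set p \<subseteq> blowup_V V q\<close> shift_V[OF _ assms(2)] by blast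
  qed
  ultimately show ?thesis using assms inj_shift[of q l]
    unfolding is_path_def
    by (auto simp: distinct_map hd_map last_map intro: inj_on_subset)
qed

lemma path_cons:
  assumes "is_path V E p a b" "c \<in> V" "c \<notin> set p" "{c, a} \<in> E"
  shows "is_path V E (c # p) c b"
proof -
  have p: "p \<noteq> []" "hd p = a" using assms(1) unfolding is_path_def by auto
  have "p ! 0 = a" using p by (simp add: hd_conv_nth)
  then have "\<forall>k. Suc k < length (c # p) \<longrightarrow> {(c#p) ! k, (c#p) ! Suc k} \<in> E"
    using assms unfolding is_path_def
    by (metis Suc_less_SucD length_Cons not0_implies_Suc nth_Cons_0 nth_Cons_Suc)
  then show ?thesis using assms p unfolding is_path_def by auto
qed

lemma path_snoc:
  assumes "is_path V E p a b" "c \<in> V" "c \<notin> set p" "{b, c} \<in> E"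
  shows "is_path V E (p @ [c]) a c"
proof -
  have p: "p \<noteq> []" "last p = b" using assms(1) unfolding is_path_def by auto
  have lb: "p ! (length p - 1) = b" using p by (simp add: last_conv_nth)
  have "{(p@[c]) ! k, (p@[c]) ! Suc k} \<in> E" if "Suc k < length (p @ [c])" for k
  proof (cases "Suc k < length p")
    case True
    then show ?thesis using assms(1) unfolding is_path_def by (auto simp: nth_append)
  next
    case False
    then have "k = length p - 1" "Suc k = length p" using that p by auto
    then show ?thesis using lb assms(4) by (simp add: nth_append)
  qed
  then show ?thesis using assms p unfolding is_path_def by auto
qed


lemma greedy_color:
  assumes fin: "finite N"
    and bnd: "\<forall>e\<in>N. card {f\<in>N. f \<noteq> e \<and> R e f} < d"
    and sym: "\<forall>e f. R e f \<longrightarrow> R f e"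
  shows "\<exists>col. (\<forall>e\<in>N. col e < (d::nat)) \<and> (\<forall>e\<in>N. \<forall>f\<in>N. e \<noteq> f \<longrightarrow> R e f \<longrightarrow> col e \<noteq> col f)"
proof -
  have "finite F \<Longrightarrow> F \<subseteq> N \<Longrightarrow> \<exists>col. (\<forall>e\<in>F. col e < d) \<and> (\<forall>e\<in>F. \<forall>f\<in>F. e \<noteq> f \<longrightarrow> R e f \<longrightarrow> col e \<noteq> col f)" for F
  proof (induction F rule: finite_induct)
    case (insert e F)
    then obtain col where c1: "\<forall>e\<in>F. col e < d" and c2: "\<forall>e\<in>F. \<forall>f\<in>F. e \<noteq> f \<longrightarrow> R e f \<longrightarrow> col e \<noteq> col f"
      by auto
    have eN: "e \<in> N" using insert by auto
    define U where "U = col ` {f\<in>F. R e f}"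
    have "{f\<in>F. R e f} \<subseteq> {f\<in>N. f \<noteq> e \<and> R e f}" using insert by auto
    then have "card {f\<in>F. R e f} \<le> card {f\<in>N. f \<noteq> e \<and> R e f}"
      using fin by (intro card_mono) auto
    moreover have "card U \<le> card {f\<in>F. R e f}" unfolding U_def
      by (rule card_image_le) (use insert(1) in simp)
    moreover have "card {f\<in>N. f \<noteq> e \<and> R e f} < d" using bnd eN by blast
    ultimately have "card U < d" by linarith
    moreover have "finite U" unfolding U_def using insert(1) by simp
    ultimately have "\<not> {0..<d} \<subseteq> U"
      using card_mono[of U "{0..<d}"] by auto
    then obtain c where c: "c < d" "c \<notin> U" by (meson atLeastLessThan_iff subsetI zero_le)
    show ?case
      apply (rule exI[of _ "col(e := c)"])
      using c1 c2 c insert(2) sym unfolding U_def by auto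
  qed (auto)
  then show ?thesis using fin by blast
qed


definition bs :: "nat \<Rightarrow> 'a \<times> nat \<Rightarrow> 'a \<times> nat" where "bs q w = (fst w, snd w mod q)"
definition ly :: "nat \<Rightarrow> 'a \<times> nat \<Rightarrow> nat" where "ly q w = snd w div q"

lemma bs_shift: "x \<in> blowup_V V q \<Longrightarrow> bs q (shift q l x) = x"
  by (auto simp: bs_def shift_def blowup_V_def)
lemma ly_shift: "x \<in> blowup_V V q \<Longrightarrow> ly q (shift q l x) = l"
  by (auto simp: ly_def shift_def blowup_V_def)

lemma path_two: "a \<noteq> b \<Longrightarrow> a \<in> V \<Longrightarrow> b \<in> V \<Longrightarrow> {a,b} \<in> E \<Longrightarrow> is_path V E [a,b] a b"
  unfolding is_path_def by (auto simp: less_Suc_eq)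

definition Xs :: "nat \<Rightarrow> nat \<Rightarrow> ('a \<times> nat) set \<Rightarrow> ('a \<times> nat) set" where
  "Xs q s X = (\<lambda>(x,l). shift q l x) ` (X \<times> {0..<s})"

lemma Xs_mem:
  assumes "w \<in> Xs q s X" "X \<subseteq> blowup_V V q"
  shows "bs q w \<in> X" "ly q w < s" "w = shift q (ly q w) (bs q w)"
  using assms by (auto simp: Xs_def bs_shift ly_shift)

lemma Xs_sub:
  assumes "X \<subseteq> blowup_V V q" "q * s \<le> t"
  shows "Xs q s X \<subseteq> blowup_V V t"
proof
  fix w assume "w \<in> Xs q s X"
  then obtain x l where "x \<in> X" "l < s" "w = shift q l x" by (auto simp: Xs_def)
  moreover have "q * l + q \<le> t" using \<open>l < s\<close> assms(2)
    by (metis Suc_leI add.commute le_trans mult_Suc_right mult_le_mono2)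
  ultimately show "w \<in> blowup_V V t" using shift_V assms(1) by blast
qed

lemma edge_layers:
  assumes "v \<in> blowup_V V q" "q*l+q \<le> t" "q*l'+q \<le> t" "l \<noteq> l'"
  shows "{shift q l v, shift q l' v} \<in> blowup_E V E t"
proof -
  have "snd v < q" "fst v \<in> V" using assms(1) by (auto simp: blowup_V_def)
  have lne: "q * l \<noteq> q * l'" using assms(4) \<open>snd v < q\<close> by simp
  have "snd v + q*l < t" "snd v + q*l' < t" using assms(2,3) \<open>snd v < q\<close> by linarith+
  moreover have "snd v + q*l \<noteq> snd v + q*l'" using lne by simp
  ultimately have "{(fst v, snd v + q*l), (fst v, snd v + q*l')} \<in> blowup_E V E t"
    by (intro edge_same \<open>fst v \<in> V\<close>)
  then show ?thesis by (simp add: shift_def)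
qed


lemma main_link:
  assumes finV: "finite V" and qpos: "q > 0"
    and ml: "matching_linked (blowup_V V q) (blowup_E V E q) X"
    and tbig: "(3*s+1)*q \<le> t"
  shows "matching_linked (blowup_V V t) (blowup_E V E t) (Xs q s X)"
proof -
  let ?Vq = "blowup_V V q" and ?Eq = "blowup_E V E q"
  let ?Vt = "blowup_V V t" and ?Et = "blowup_E V E t"
  let ?Y = "Xs q s X"
  have XVq: "X \<subseteq> ?Vq" using ml unfolding matching_linked_def by blast
  have finX: "finite X" using XVq finV by (auto simp: blowup_V_def intro: finite_subset)
  have finY: "finite ?Y" using finX by (simp add: Xs_def)
  have YVt: "?Y \<subseteq> ?Vt" using Xs_sub[OF XVq] tbig by (simp add: algebra_simps)
  have Ymem: "bs q w \<in> X" "ly q w < s" "w = shift q (ly q w) (bs q w)" if "w \<in> ?Y" for w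
    using Xs_mem[OF that XVq] by auto
  have layok: "q * l + q \<le> t" if "l \<le> 3*s" for l
  proof -
    have "q * l + q = (l+1)*q" by simp
    also have "\<dots> \<le> (3*s+1)*q" using that by (intro mult_right_mono) auto
    finally show ?thesis using tbig by linarith
  qed
  have "has_uncongested_linkage ?Vt ?Et M" if M: "matching_on ?Y M" for M
  proof -
    have Me: "\<exists>a b. e = {a,b} \<and> a \<noteq> b \<and> a \<in> ?Y \<and> b \<in> ?Y" if "e \<in> M" for e
      using M that unfolding matching_on_def by blast
    have Md: "e \<inter> f = {}" if "e \<in> M" "f \<in> M" "e \<noteq> f" for e f
      using M that unfolding matching_on_def by blast
    have finM: "finite M"
    proof -
      have "M \<subseteq> Pow ?Y" using Me by blast
      then show ?thesis using finY by (meson finite_Pow_iff finite_subset)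
    qed
    define N where "N = {e\<in>M. \<exists>a b. e = {a,b} \<and> bs q a \<noteq> bs q b}"
    define R where "R = (\<lambda>e f. bs q ` e \<inter> bs q ` f \<noteq> ({} :: ('a\<times>nat) set))"
    have bnd: "\<forall>e\<in>N. card {f\<in>N. f \<noteq> e \<and> R e f} < 2*s+1"
    proof
      fix e assume "e \<in> N"
      then have "e \<in> M" by (simp add: N_def)
      then obtain a b where ab: "e = {a,b}" "a \<in> ?Y" "b \<in> ?Y" using Me by blast
      define T where "T = (\<lambda>(x,l). shift q l x) ` ({bs q a, bs q b} \<times> {0..<s})"
      have cT: "card T \<le> 2*s"
      proof -
        have "card T \<le> card ({bs q a, bs q b} \<times> {0..<s})" unfolding T_def by (rule card_image_le) simp
        also have "\<dots> = card {bs q a, bs q b} * s" by (simp add: card_cartesian_product)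
        also have "\<dots> \<le> 2 * s" by (intro mult_right_mono) (simp_all add: card_insert_if)
        finally show ?thesis .
      qed
      define g where "g = (\<lambda>f. SOME w. w \<in> f \<and> bs q w \<in> bs q ` e)"
      have g: "g f \<in> f \<and> bs q (g f) \<in> bs q ` e" if "f \<in> {f\<in>N. f \<noteq> e \<and> R e f}" for f
      proof -
        have "R e f" using that by (simp only: mem_Collect_eq)
        then have "bs q ` e \<inter> bs q ` f \<noteq> {}" unfolding R_def .
        then obtain z where z: "z \<in> bs q ` e \<inter> bs q ` f" by (meson ex_in_conv)
        then have "z \<in> bs q ` f" by (rule IntD2)
        then obtain w where w: "w \<in> f" "z = bs q w" by (rule imageE)
        have "z \<in> bs q ` e" using z by (rule IntD1)
        then have "\<exists>w. w \<in> f \<and> bs q w \<in> bs q ` e" using w by metis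
        then show ?thesis unfolding g_def by (rule someI_ex)
      qed
      have "inj_on g {f\<in>N. f \<noteq> e \<and> R e f}"
      proof (rule inj_onI)
        fix f1 f2 assume f: "f1 \<in> {f\<in>N. f \<noteq> e \<and> R e f}" "f2 \<in> {f\<in>N. f \<noteq> e \<and> R e f}" "g f1 = g f2"
        show "f1 = f2"
        proof (rule ccontr)
          assume "f1 \<noteq> f2"
          then have "f1 \<inter> f2 = {}" using Md f(1,2) by (auto simp: N_def)
          then show False using g[OF f(1)] g[OF f(2)] f(3) by auto
        qed
      qed
      moreover have "g ` {f\<in>N. f \<noteq> e \<and> R e f} \<subseteq> T"
      proof
        fix w assume "w \<in> g ` {f\<in>N. f \<noteq> e \<and> R e f}"
        then obtain f where f: "f \<in> {f\<in>N. f \<noteq> e \<and> R e f}" "w = g f" by blast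
        then have "w \<in> f" "bs q w \<in> {bs q a, bs q b}" using g[OF f(1)] ab by auto
        moreover have "f \<in> M" using f by (simp add: N_def)
        ultimately have "w \<in> ?Y" using Me by blast
        then have "ly q w < s" "w = shift q (ly q w) (bs q w)" using Ymem by auto
        then show "w \<in> T" unfolding T_def using \<open>bs q w \<in> {bs q a, bs q b}\<close>
          by (intro image_eqI[of _ _ "(bs q w, ly q w)"]) auto
      qed
      moreover have "finite T" by (simp add: T_def)
      ultimately have "card {f\<in>N. f \<noteq> e \<and> R e f} \<le> card T" by (rule card_inj_on_le)
      then show "card {f\<in>N. f \<noteq> e \<and> R e f} < 2*s+1" using cT by linarith
    qed
    have finN: "finite N" using finM by (simp add: N_def)
    have symR: "\<forall>e f. R e f \<longrightarrow> R f e" unfolding R_def by blast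
    obtain col where col1: "\<forall>e\<in>N. col e < 2*s+1"
      and col2: "\<forall>e\<in>N. \<forall>f\<in>N. e \<noteq> f \<longrightarrow> R e f \<longrightarrow> col e \<noteq> col f"
      using greedy_color[OF finN bnd symR] by blast
    define Mc where "Mc = (\<lambda>c. {bs q ` e | e. e \<in> N \<and> col e = c})"
    have Mcm: "matching_on X (Mc c)" for c
      unfolding matching_on_def
    proof (intro conjI ballI impI)
      fix p assume "p \<in> Mc c"
      then obtain e where e: "e \<in> N" "p = bs q ` e" by (auto simp: Mc_def)
      then obtain a b where ab: "e = {a,b}" "bs q a \<noteq> bs q b" by (auto simp: N_def)
      have "e \<in> M" using e(1) by (simp add: N_def)
      then have "e \<subseteq> ?Y" using Me by blast
      then have "a \<in> ?Y" "b \<in> ?Y" using ab by auto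
      then have "bs q a \<in> X" "bs q b \<in> X" using Ymem by blast+
      then show "\<exists>a b. p = {a, b} \<and> a \<noteq> b \<and> a \<in> X \<and> b \<in> X" using ab e(2) by blast
    next
      fix p p' assume "p \<in> Mc c" "p' \<in> Mc c" "p \<noteq> p'"
      then obtain e e' where ee: "e \<in> N" "e' \<in> N" "col e = c" "col e' = c" "p = bs q ` e" "p' = bs q ` e'"
        by (auto simp: Mc_def)
      have "e \<noteq> e'" using ee(5,6) \<open>p \<noteq> p'\<close> by blast
      have "\<not> R e e'" using col2 ee(1-4) \<open>e \<noteq> e'\<close> by metis
      then show "p \<inter> p' = {}" using ee unfolding R_def by auto
    qed
    have "\<forall>c. \<exists>P. (\<forall>e\<in>Mc c. \<exists>a b. e = {a, b} \<and> is_path ?Vq ?Eq (P e) a b) \<and>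
        (\<forall>e\<in>Mc c. \<forall>f\<in>Mc c. e \<noteq> f \<longrightarrow> set (P e) \<inter> set (P f) = {})"
      using ml Mcm unfolding matching_linked_def has_uncongested_linkage_def by blast
    then have "\<exists>PP. \<forall>c. (\<forall>e\<in>Mc c. \<exists>a b. e = {a, b} \<and> is_path ?Vq ?Eq (PP c e) a b) \<and>
        (\<forall>e\<in>Mc c. \<forall>f\<in>Mc c. e \<noteq> f \<longrightarrow> set (PP c e) \<inter> set (PP c f) = {})"
      by (rule choice)
    then obtain PP where PPall: "\<forall>c. (\<forall>e\<in>Mc c. \<exists>a b. e = {a, b} \<and> is_path ?Vq ?Eq (PP c e) a b) \<and>
        (\<forall>e\<in>Mc c. \<forall>f\<in>Mc c. e \<noteq> f \<longrightarrow> set (PP c e) \<inter> set (PP c f) = {})" by blast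
    have PP1: "\<And>c. \<forall>e\<in>Mc c. \<exists>a b. e = {a, b} \<and> is_path ?Vq ?Eq (PP c e) a b"
      and PP2: "\<And>c. \<forall>e\<in>Mc c. \<forall>f\<in>Mc c. e \<noteq> f \<longrightarrow> set (PP c e) \<inter> set (PP c f) = {}"
      using PPall by blast+
    define S where "S = (\<lambda>e. e \<union> (if e \<in> N then shift q (s + col e) ` set (PP (col e) (bs q ` e)) else {}))"
    have PPV: "set (PP (col e) (bs q ` e)) \<subseteq> ?Vq" if "e \<in> N" for e
    proof -
      have "bs q ` e \<in> Mc (col e)" using that by (auto simp: Mc_def)
      then have "\<exists>a b. bs q ` e = {a, b} \<and> is_path ?Vq ?Eq (PP (col e) (bs q ` e)) a b"
        by (rule bspec[OF PP1[of "col e"]])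
      then obtain u v where "is_path ?Vq ?Eq (PP (col e) (bs q ` e)) u v" by (elim exE conjE)
      then show ?thesis by (simp add: is_path_def)
    qed
    have lyS1: "ly q w < s" if "e \<in> M" "w \<in> e" for e w
      using that Me Ymem by blast
    have lyS2: "ly q w = s + col e" if "e \<in> N" "w \<in> shift q (s + col e) ` set (PP (col e) (bs q ` e))" for e w
      using that PPV ly_shift by blast
    have claim1: "\<exists>p a b. e = {a,b} \<and> is_path ?Vt ?Et p a b \<and> set p \<subseteq> S e" if eM: "e \<in> M" for e
    proof -
      obtain a b where ab: "e = {a,b}" "a \<noteq> b" "a \<in> ?Y" "b \<in> ?Y" using Me[OF eM] by blast
      have aVt: "a \<in> ?Vt" "b \<in> ?Vt" using ab YVt by auto
      show ?thesis
      proof (cases "e \<in> N")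
        case False
        have "bs q a \<noteq> bs q b \<Longrightarrow> e \<in> N" unfolding N_def using eM ab(1)
          by (intro CollectI conjI exI[of _ a] exI[of _ b]) simp_all
        then have bsab: "bs q a = bs q b" using False by blast
        then have f: "fst a = fst b" by (simp add: bs_def)
        have sn: "snd a \<noteq> snd b" using f ab(2) by (simp add: prod_eq_iff)
        have "fst a \<in> V" "snd a < t" "snd b < t" using aVt by (auto simp: blowup_V_def)
        then have "{(fst a, snd a), (fst a, snd b)} \<in> ?Et" using sn by (intro edge_same)
        moreover have "a = (fst a, snd a)" "b = (fst a, snd b)" using f by (simp_all add: prod_eq_iff)
        ultimately have "{a,b} \<in> ?Et" by simp
        then have "is_path ?Vt ?Et [a,b] a b" by (rule path_two[OF ab(2) aVt])
        moreover have "set [a,b] \<subseteq> S e" using ab(1) by (simp add: S_def)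
        ultimately show ?thesis using ab(1) by blast
      next
        case True
        define c where "c = col e"
        have c: "c < 2*s+1" using col1 True c_def by blast
        have pair: "bs q ` e \<in> Mc c" using True c_def by (auto simp: Mc_def)
        obtain u v where uv: "bs q ` e = {u,v}" "is_path ?Vq ?Eq (PP c (bs q ` e)) u v"
          using bspec[OF PP1[of c] pair] by (elim exE conjE)
        have bse: "bs q ` e = {bs q a, bs q b}" using ab by auto
        obtain a' b' where a'b': "e = {a',b'}" "bs q a' = u" "bs q b' = v"
        proof (cases "bs q a = u")
          case True
          have "{bs q a, bs q b} = {u,v}" using uv(1) bse by simp
          then have "bs q b = v" using True unfolding doubleton_eq_iff by auto
          then show ?thesis using that[of a b] True ab(1) by simp
        next
          case False
          have "{bs q a, bs q b} = {u,v}" using uv(1) bse by simp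
          then have "bs q b = u" "bs q a = v" using False unfolding doubleton_eq_iff by blast+
          then show ?thesis using that[of b a] ab(1) by (simp add: insert_commute)
        qed
        have ine: "a' \<in> e" "b' \<in> e" using a'b'(1) by auto
        have eY: "e \<subseteq> ?Y" using ab(1,3,4) by simp
        have "a' \<noteq> b'"
        proof
          assume "a' = b'"
          then have "e = {a'}" using a'b'(1) by simp
          then show False using ab(1,2) by (metis insertI1 insert_commute singletonD)
        qed
        then have a'b'Y: "a' \<in> ?Y" "b' \<in> ?Y" "a' \<noteq> b'" using ine eY by blast+
        define l where "l = s + c"
        have lok: "q * l + q \<le> t" using layok c l_def by simp
        define p1 where "p1 = map (shift q l) (PP c (bs q ` e))"
        have p1: "is_path ?Vt ?Et p1 (shift q l u) (shift q l v)"
          unfolding p1_def by (rule path_map[OF uv(2) lok])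
        have setp1: "set p1 = shift q l ` set (PP c (bs q ` e))" by (simp add: p1_def)
        have lyp1: "ly q w = l" if "w \<in> set p1" for w
          using lyS2[OF True] setp1 that c_def l_def by auto
        have lya: "ly q a' < s" "ly q b' < s" using Ymem a'b'Y by auto
        have nb: "b' \<notin> set p1"
        proof
          assume "b' \<in> set p1"
          then have "ly q b' = l" by (rule lyp1)
          then show False using lya(2) l_def by simp
        qed
        have na1: "a' \<notin> set p1"
        proof
          assume "a' \<in> set p1"
          then have "ly q a' = l" by (rule lyp1)
          then show False using lya(1) l_def by simp
        qed
        have na: "a' \<notin> set (p1 @ [b'])" using na1 a'b'Y(3) by simp
        have "bs q a' \<in> X" "bs q b' \<in> X" using Ymem(1)[OF a'b'Y(1)] Ymem(1)[OF a'b'Y(2)] by auto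
        then have uX: "u \<in> ?Vq" "v \<in> ?Vq" using a'b'(2,3) XVq by auto
        define la where "la = ly q a'"
        define lb where "lb = ly q b'"
        have ea: "a' = shift q la u" "b' = shift q lb v"
          using Ymem(3)[OF a'b'Y(1)] Ymem(3)[OF a'b'Y(2)] a'b'(2,3) la_def lb_def by simp_all
        have lok2: "q * la + q \<le> t" "q * lb + q \<le> t" using lya la_def lb_def by (auto intro: layok)
        have ne: "l \<noteq> lb" "la \<noteq> l" using lya la_def lb_def l_def by auto
        have "{shift q l v, shift q lb v} \<in> ?Et" by (rule edge_layers[OF uX(2) lok lok2(2) ne(1)])
        then have "{shift q l v, b'} \<in> ?Et" using ea(2) by simp
        then have p2: "is_path ?Vt ?Et (p1 @ [b']) (shift q l u) b'"
          using path_snoc[OF p1 _ nb] a'b'Y YVt by blast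
        have "{shift q la u, shift q l u} \<in> ?Et" by (rule edge_layers[OF uX(1) lok2(1) lok ne(2)])
        then have "{a', shift q l u} \<in> ?Et" using ea(1) by simp
        then have p3: "is_path ?Vt ?Et (a' # p1 @ [b']) a' b'"
          using path_cons[OF p2 _ na] a'b'Y YVt by blast
        have "set (a' # p1 @ [b']) \<subseteq> S e"
          using setp1 a'b'(1) True c_def l_def by (auto simp: S_def)
        then show ?thesis using p3 a'b'(1) by blast
      qed
    qed
    define Sh where "Sh = (\<lambda>e. shift q (s + col e) ` set (PP (col e) (bs q ` e)))"
    have Sdec: "w \<in> e \<or> (e \<in> N \<and> w \<in> Sh e)" if "w \<in> S e" for e w
      using that unfolding S_def Sh_def by (auto split: if_splits)
    have claim2: "S e \<inter> S f = {}" if ef: "e \<in> M" "f \<in> M" "e \<noteq> f" for e f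
    proof (rule ccontr)
      assume "S e \<inter> S f \<noteq> {}"
      then obtain w where w: "w \<in> S e" "w \<in> S f" by blast
      have d: "e \<inter> f = {}" using Md ef by blast
      show False
      proof (cases "w \<in> e")
        case True
        then have l1: "ly q w < s" using lyS1 ef(1) by blast
        show False
        proof (cases "w \<in> f")
          case True then show False using d \<open>w \<in> e\<close> by blast
        next
          case False
          then have "f \<in> N" "w \<in> Sh f" using Sdec w(2) by blast+
          then have "ly q w = s + col f" using lyS2 unfolding Sh_def by blast
          then show False using l1 by simp
        qed
      next
        case False
        then have eN: "e \<in> N" "w \<in> Sh e" using Sdec w(1) by blast+
        then have l2: "ly q w = s + col e" using lyS2 unfolding Sh_def by blast
        show False
        proof (cases "w \<in> f")
          case True
          then have "ly q w < s" using lyS1 ef(2) by blast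
          then show False using l2 by simp
        next
          case False
          then have fN: "f \<in> N" "w \<in> Sh f" using Sdec w(2) by blast+
          then have "ly q w = s + col f" using lyS2 unfolding Sh_def by blast
          then have cc: "col e = col f" using l2 by simp
          then have nR: "\<not> R e f" using col2 eN(1) fN(1) ef(3) by metis
          obtain a b where "e = {a,b}" using Me ef(1) by blast
          then have "bs q ` e \<noteq> {}" by simp
          then have neq: "bs q ` e \<noteq> bs q ` f" using nR unfolding R_def by auto
          have "bs q ` e \<in> Mc (col e)" "bs q ` f \<in> Mc (col e)" using eN(1) fN(1) cc by (auto simp: Mc_def)
          then have disj: "set (PP (col e) (bs q ` e)) \<inter> set (PP (col e) (bs q ` f)) = {}"
            using bspec[OF bspec[OF PP2[of "col e"]]] neq by blast
          obtain x where x: "x \<in> set (PP (col e) (bs q ` e))" "w = shift q (s + col e) x"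
            using eN(2) unfolding Sh_def by blast
          obtain y where y: "y \<in> set (PP (col e) (bs q ` f))" "w = shift q (s + col e) y"
            using fN(2) cc unfolding Sh_def by auto
          have "x = y" using x(2) y(2) inj_shift by (metis injD)
          then show False using disj x(1) y(1) by blast
        qed
      qed
    qed
    define P where "P = (\<lambda>e. SOME p. \<exists>a b. e = {a,b} \<and> is_path ?Vt ?Et p a b \<and> set p \<subseteq> S e)"
    have P: "\<exists>a b. e = {a,b} \<and> is_path ?Vt ?Et (P e) a b \<and> set (P e) \<subseteq> S e" if "e \<in> M" for e
      unfolding P_def by (rule someI_ex) (rule claim1[OF that])
    show ?thesis unfolding has_uncongested_linkage_def
    proof (rule exI[of _ P], intro conjI ballI impI)
      fix e assume "e \<in> M" then show "\<exists>a b. e = {a, b} \<and> is_path ?Vt ?Et (P e) a b" using P by blast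
    next
      fix e f assume "e \<in> M" "f \<in> M" "e \<noteq> f"
      then show "set (P e) \<inter> set (P f) = {}" using P[of e] P[of f] claim2[of e f] by blast
    qed
  qed
  then show ?thesis unfolding matching_linked_def using YVt by blast
qed


lemma card_Xs:
  assumes "X \<subseteq> blowup_V V q" "finite X"
  shows "card (Xs q s X) = card X * s"
proof -
  have "inj_on (\<lambda>(x,l). shift q l x) (X \<times> {0..<s})"
  proof (rule inj_on_inverseI[where g = "\<lambda>w. (bs q w, ly q w)"])
    fix p assume p: "p \<in> X \<times> {0..<s}"
    then have "fst p \<in> blowup_V V q" using assms(1) by auto
    then have "bs q (shift q (snd p) (fst p)) = fst p" "ly q (shift q (snd p) (fst p)) = snd p"
      by (rule bs_shift, rule ly_shift)
    then show "(\<lambda>w. (bs q w, ly q w)) ((\<lambda>(x,l). shift q l x) p) = p"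
      by (simp add: case_prod_beta)
  qed
  then show ?thesis unfolding Xs_def by (simp add: card_image card_cartesian_product)
qed

lemma ml_subset:
  assumes "matching_linked V E Y" "Z \<subseteq> Y"
  shows "matching_linked V E Z"
proof -
  have mZY: "matching_on Y M" if h: "matching_on Z M" for M
  proof -
    have h1: "\<forall>e\<in>M. \<exists>a b. e = {a, b} \<and> a \<noteq> b \<and> a \<in> Z \<and> b \<in> Z"
      and h2: "\<forall>e\<in>M. \<forall>f\<in>M. e \<noteq> f \<longrightarrow> e \<inter> f = {}"
      using h unfolding matching_on_def by (rule conjunct1, rule conjunct2)
    have "\<forall>e\<in>M. \<exists>a b. e = {a, b} \<and> a \<noteq> b \<and> a \<in> Y \<and> b \<in> Y"
    proof
      fix e assume "e \<in> M"
      then obtain a b where "e = {a, b}" "a \<noteq> b" "a \<in> Z" "b \<in> Z" using h1 by blast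
      then show "\<exists>a b. e = {a, b} \<and> a \<noteq> b \<and> a \<in> Y \<and> b \<in> Y" using assms(2) by blast
    qed
    then show ?thesis using h2 unfolding matching_on_def by (intro conjI)
  qed
  moreover have YV: "Y \<subseteq> V" and lk: "\<forall>M. matching_on Y M \<longrightarrow> has_uncongested_linkage V E M"
    using assms(1) unfolding matching_linked_def by (rule conjunct1, rule conjunct2)
  ultimately show ?thesis unfolding matching_linked_def
  proof (intro conjI allI impI)
    show "Z \<subseteq> V" using YV assms(2) by (rule subset_trans[rotated])
  next
    fix M assume "matching_on Z M"
    then show "has_uncongested_linkage V E M" using lk mZY by blast
  qed
qed

theorem mainTheorem6:
  fixes V :: "'a set" and E :: "'a set set" and q :: nat and X :: "('a \<times> nat) set"
  assumes "graph V E"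
    and "matching_linked (blowup_V V q) (blowup_E V E q) X"
  shows "linkage_capacity V E \<ge> (1/3) * (real (card X) / real q)"
proof -
  define C where "C = {c::real. c > 0 \<and>
     (\<exists>T::nat. \<forall>t\<ge>T. \<exists>X. matching_linked (blowup_V V t) (blowup_E V E t) X
                          \<and> card X = nat \<lfloor>c * real t\<rfloor>)}"
  have finV: "finite V" using assms(1) by (simp add: graph_def)
  have XVq: "X \<subseteq> blowup_V V q" using assms(2) by (simp add: matching_linked_def)
  have finX: "finite X" using XVq finV by (auto simp: blowup_V_def intro: finite_subset)
  have bdd: "bdd_above (insert 0 C)"
  proof (rule bdd_aboveI[of _ "real (card V) + 1"])
    fix c assume "c \<in> insert 0 C"
    then consider "c = 0" | "c \<in> C" by blast
    then show "c \<le> real (card V) + 1"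
    proof cases
      case 2
      then obtain T where T: "\<forall>t\<ge>T. \<exists>X. matching_linked (blowup_V V t) (blowup_E V E t) X
                          \<and> card X = nat \<lfloor>c * real t\<rfloor>" unfolding C_def by blast
      define t where "t = max T 1"
      have "T \<le> t" by (simp add: t_def)
      then obtain Y where Y: "matching_linked (blowup_V V t) (blowup_E V E t) Y" "card Y = nat \<lfloor>c * real t\<rfloor>"
        using T by blast
      have "Y \<subseteq> blowup_V V t" using Y(1) by (simp add: matching_linked_def)
      moreover have "finite (blowup_V V t)" using finV by (simp add: blowup_V_def)
      ultimately have "card Y \<le> card (blowup_V V t)" by (rule card_mono[rotated])
      also have "\<dots> = card V * t" by (simp add: blowup_V_def card_cartesian_product)
      finally have "nat \<lfloor>c * real t\<rfloor> \<le> card V * t" using Y(2) by simp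
      then have "\<lfloor>c * real t\<rfloor> \<le> int (card V * t)" by linarith
      then have "c * real t < real (card V * t) + 1" by linarith
      then have "c * real t < (real (card V) + 1) * real t" using t_def
        by (simp add: algebra_simps)
      moreover have "real t > 0" using t_def by simp
      ultimately show ?thesis by simp
    qed simp
  qed
  have zero: "0 \<le> linkage_capacity V E"
    unfolding linkage_capacity_def C_def[symmetric] using bdd by (intro cSup_upper) auto
  show ?thesis
  proof (cases "q = 0 \<or> card X = 0")
    case True
    then show ?thesis using zero by auto
  next
    case False
    then have qpos: "q > 0" and kpos: "card X > 0" by auto
    define k where "k = card X"
    define A where "A = real k / (3 * real q)"
    have Apos: "A > 0" using qpos kpos k_def A_def by simp
    have inC: "c \<in> C" if c: "0 < c" "c < A" for c
    proof -
      define T where "T = max q (nat \<lceil>2 * real k / (A - c)\<rceil>)"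
      have "\<forall>t\<ge>T. \<exists>X. matching_linked (blowup_V V t) (blowup_E V E t) X \<and> card X = nat \<lfloor>c * real t\<rfloor>"
      proof (intro allI impI)
        fix t assume tT: "T \<le> t"
        define m where "m = t div q"
        define s where "s = (m - 1) div 3"
        have qt: "q \<le> t" using tT unfolding T_def by simp
        have m1: "m \<ge> 1" using div_le_mono[OF qt, of q] qpos unfolding m_def by simp
        have "3 * s + 1 \<le> m" using m1 unfolding s_def by linarith
        then have "(3*s+1)*q \<le> m * q" by (rule mult_right_mono) simp
        also have "\<dots> \<le> t" unfolding m_def by simp
        finally have tb: "(3*s+1)*q \<le> t" .
        have ml: "matching_linked (blowup_V V t) (blowup_E V E t) (Xs q s X)"
          by (rule main_link[OF finV qpos assms(2) tb])
        have cXs: "card (Xs q s X) = k * s" using card_Xs[OF XVq finX] k_def by simp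
        have m3: "m \<le> 3 * s + 3" unfolding s_def by linarith
        have "t < q * (m + 1)" using dividend_less_div_times[OF qpos, of t] unfolding m_def
          by (simp add: algebra_simps)
        also have "\<dots> \<le> q * (3*s+4)" using m3 by (intro mult_left_mono) simp_all
        finally have "t < q * (3*s+4)" .
        then have "real t < real (q * (3*s+4))" by (simp only: of_nat_less_iff)
        then have tlt: "real t < real q * (3 * real s + 4)" by simp
        have tT2: "real t \<ge> 2 * real k / (A - c)" using tT unfolding T_def by linarith
        have Ac: "A - c > 0" using c by simp
        have h1: "2 * real k \<le> (A - c) * real t" using tT2 Ac by (simp add: field_simps)
        have kp: "real k > 0" using kpos k_def by simp
        have "real k * real t < real k * (real q * (3 * real s + 4))"
          using tlt kp by (rule mult_strict_left_mono)
        then have h2: "A * real t < real k * (3 * real s + 4) / 3"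
          using qpos unfolding A_def by (simp add: field_simps)
        have e1: "(A - c) * real t = A * real t - c * real t" by (simp add: algebra_simps)
        have e2: "real k * (3 * real s + 4) / 3 = real k * real s + 4 * real k / 3" by (simp add: field_simps)
        have e3: "real (k * s) = real k * real s" by simp
        have "c * real t \<le> A * real t - 2 * real k" using h1 e1 by linarith
        also have "\<dots> < real k * real s + 4 * real k / 3 - 2 * real k" using h2 e2 by linarith
        also have "\<dots> \<le> real k * real s" using kp by linarith
        finally have "c * real t \<le> real (k * s)" using e3 by linarith
        then have "\<lfloor>c * real t\<rfloor> \<le> int (k * s)" by (simp add: floor_le_iff)
        then have le: "nat \<lfloor>c * real t\<rfloor> \<le> k * s" by linarith
        then have le2: "nat \<lfloor>c * real t\<rfloor> \<le> card (Xs q s X)" using cXs by simp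
        obtain Z where Z: "Z \<subseteq> Xs q s X" "card Z = nat \<lfloor>c * real t\<rfloor>"
          using obtain_subset_with_card_n[OF le2] by blast
        show "\<exists>X. matching_linked (blowup_V V t) (blowup_E V E t) X \<and> card X = nat \<lfloor>c * real t\<rfloor>"
          using ml_subset[OF ml Z(1)] Z(2) by blast
      qed
      then show ?thesis unfolding C_def using c by blast
    qed
    have "A \<le> Sup (insert 0 C)"
    proof (rule dense_le_bounded[OF Apos])
      fix w assume "0 < w" "w < A"
      then show "w \<le> Sup (insert 0 C)" using inC bdd by (intro cSup_upper) auto
    qed
    then show ?thesis unfolding linkage_capacity_def C_def A_def k_def by (simp add: field_simps)
  qed
qed

end
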